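(* Let $m\ge1$ and let $u$ be an $m$-labeled unranked tree with $|u|=p$ edges. The generating function $\mathbf C^{\mathcal T}_{m,p}(z)=\sum_{n\ge0} c_n z^n$, where $c_n$ is the number of $m$-labeled unranked trees with $n$ edges that contain $u$ as a subtree, is $$\mathbf C^{\mathcal T}_{m,p}(z)=\frac{z^{p+1}+\sqrt{1-4mz+2z^{p+1}+z^{2p+2}}-\sqrt{1-4mz}}{2z}.$$
   Context: An $m$-labeled unranked tree is a non-empty finite rooted tree whose nodes carry labels from $\{1,\dots,m\}$ and in which the children of every node are linearly ordered (any finite number of children). Its size is its number of edges. A tree $t$ contains $u$ as a subtree if for some node $v$ of $t$ the subtree rooted at $v$ (consisting of $v$ and all its descendants) equals $u$. *)

theory Defs
  imports Complex_Main
begin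

datatype utree = Node nat "utree list"

fun labeled :: "nat \<Rightarrow> utree \<Rightarrow> bool" where
  "labeled m (Node a ts) = (a \<in> {1..m} \<and> (\<forall>t\<in>set ts. labeled m t))"

fun edges :: "utree \<Rightarrow> nat" where
  "edges (Node a ts) = length ts + sum_list (map edges ts)"

fun subtrees :: "utree \<Rightarrow> utree set" where
  "subtrees (Node a ts) = insert (Node a ts) (\<Union>t\<in>set ts. subtrees t)"

definition contains_subtree :: "utree \<Rightarrow> utree \<Rightarrow> bool" where
  "contains_subtree t u \<longleftrightarrow> u \<in> subtrees t"

definition count_containing :: "nat \<Rightarrow> utree \<Rightarrow> nat \<Rightarrow> nat" where
  "count_containing m u n = card {t. labeled m t \<and> edges t = n \<and> contains_subtree t u}"

end

theory Submission
  imports Defs Complex_Main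
begin


definition fsz :: "utree list \<Rightarrow> nat" where
  "fsz ts = sum_list (map (\<lambda>t. Suc (edges t)) ts)"

lemma fsz_simps[simp]: "fsz [] = 0" "fsz (t # ts) = Suc (edges t) + fsz ts"
  by (simp_all add: fsz_def)

lemma edges_fsz[simp]: "edges (Node a ts) = fsz ts"
  by (induct ts) (simp_all add: fsz_def)

declare edges.simps[simp del]

definition FS :: "utree set \<Rightarrow> nat \<Rightarrow> utree list set" where
  "FS S n = {ts. set ts \<subseteq> S \<and> fsz ts = n}"

lemma FS_0: "FS S 0 = {[]}"
  by (auto simp: FS_def fsz_def)

lemma FS_Suc: "FS S (Suc n) = (\<Union>k\<in>{..n}. (\<lambda>(t,ts). t # ts) ` ({t\<in>S. edges t = k} \<times> FS S (n-k)))"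
proof (intro equalityI subsetI)
  fix xs assume "xs \<in> FS S (Suc n)"
  then show "xs \<in> (\<Union>k\<in>{..n}. (\<lambda>(t,ts). t # ts) ` ({t\<in>S. edges t = k} \<times> FS S (n-k)))"
    by (cases xs) (auto simp: FS_def intro!: bexI[of _ "edges (hd xs)"])
qed (auto simp: FS_def)

lemma edges_lt_fsz: "t \<in> set ts \<Longrightarrow> edges t < fsz ts"
  by (induct ts) auto

lemma FS_finite:
  assumes "\<And>k. k < n \<Longrightarrow> finite {t\<in>S. edges t = k}"
  shows "finite (FS S n)"
proof -
  have "FS S n \<subseteq> {xs. set xs \<subseteq> (\<Union>k<n. {t\<in>S. edges t = k}) \<and> length xs \<le> n}"
  proof
    fix xs assume "xs \<in> FS S n"
    moreover have "length xs \<le> fsz xs" by (induct xs) auto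
    ultimately show "xs \<in> {xs. set xs \<subseteq> (\<Union>k<n. {t\<in>S. edges t = k}) \<and> length xs \<le> n}"
      by (auto simp: FS_def dest: edges_lt_fsz)
  qed
  moreover have "finite {xs. set xs \<subseteq> (\<Union>k<n. {t\<in>S. edges t = k}) \<and> length xs \<le> n}"
    by (rule finite_lists_length_le) (use assms in auto)
  ultimately show ?thesis by (rule finite_subset)
qed

lemma FS_card_Suc:
  assumes "\<And>k. k \<le> n \<Longrightarrow> finite {t\<in>S. edges t = k}"
  shows "card (FS S (Suc n)) = (\<Sum>k\<le>n. card {t\<in>S. edges t = k} * card (FS S (n-k)))"
proof -
  have fin: "finite (FS S j)" if "j \<le> n" for j
    by (rule FS_finite) (use assms that in auto)
  have inj: "inj_on (\<lambda>(t,ts). t # ts) X" for X by (auto simp: inj_on_def)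
  show ?thesis unfolding FS_Suc
    apply (subst card_UN_disjoint)
    apply (auto simp: assms fin card_image[OF inj] card_cartesian_product)
    done
qed



lemma TS_eq: "{t. labeled m t \<and> edges t = n} = (\<lambda>(a,ts). Node a ts) ` ({1..m} \<times> FS {t. labeled m t} n)"
proof (intro equalityI subsetI)
  fix x assume "x \<in> {t. labeled m t \<and> edges t = n}"
  then show "x \<in> (\<lambda>(a,ts). Node a ts) ` ({1..m} \<times> FS {t. labeled m t} n)"
    by (cases x) (auto simp: FS_def intro!: image_eqI)
qed (auto simp: FS_def edges_fsz)

lemma TS_finite: "finite {t. labeled m t \<and> edges t = n}"
proof (induct n rule: less_induct)
  case (less n)
  have "finite (FS {t. labeled m t} n)"
    by (rule FS_finite) (use less in auto)
  then show ?case unfolding TS_eq by auto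
qed

lemma inj_Node: "inj_on (\<lambda>(a,ts). Node a ts) X" by (auto simp: inj_on_def)

lemma TS_card: "card {t. labeled m t \<and> edges t = n} = m * card (FS {t. labeled m t} n)"
  unfolding TS_eq by (simp add: card_image[OF inj_Node] card_cartesian_product)

lemma contains_Node: "contains_subtree (Node a ts) u \<longleftrightarrow> Node a ts = u \<or> (\<exists>t\<in>set ts. contains_subtree t u)"
  by (auto simp: contains_subtree_def)

lemma subtrees_edges: "x \<in> subtrees t \<Longrightarrow> edges x \<le> edges t"
proof (induct t rule: subtrees.induct)
  case (1 a ts)
  then show ?case
    using edges_lt_fsz[of _ ts] by (auto) (meson le_trans less_imp_le)
qed

lemma card_FS_L_Suc: "card (FS {t. labeled m t} (Suc n)) = (\<Sum>k\<le>n. card {t. labeled m t \<and> edges t = k} * card (FS {t. labeled m t} (n-k)))"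
  using FS_card_Suc[of n "{t. labeled m t}"] TS_finite[of m] by simp

lemma t_rec: "real (card {t. labeled m t \<and> edges t = n}) =
   (if n = 0 then real m else 0) + (if n \<ge> 1 then (\<Sum>k\<le>n-1. real (card {t. labeled m t \<and> edges t = k}) * real (card {t. labeled m t \<and> edges t = n-1-k})) else 0)"
proof (cases n)
  case 0 then show ?thesis by (simp add: TS_card FS_0)
next
  case (Suc n')
  show ?thesis unfolding Suc TS_card[of m "Suc n'"] card_FS_L_Suc
    by (simp add: TS_card sum_distrib_left algebra_simps)
qed

context
  fixes m :: nat and u :: utree
  assumes lu: "labeled m u"
begin

definition "V = {t. labeled m t \<and> \<not> contains_subtree t u}"

lemma AS_eq: "{t. labeled m t \<and> edges t = n \<and> \<not> contains_subtree t u} = ((\<lambda>(a,ts). Node a ts) ` ({1..m} \<times> FS V n)) - {u}"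
proof (intro equalityI subsetI)
  fix x assume "x \<in> {t. labeled m t \<and> edges t = n \<and> \<not> contains_subtree t u}"
  then show "x \<in> ((\<lambda>(a,ts). Node a ts) ` ({1..m} \<times> FS V n)) - {u}"
    by (cases x) (auto simp: FS_def V_def contains_Node intro!: image_eqI)
qed (auto simp: FS_def V_def contains_Node)

lemma u_in_iff: "u \<in> (\<lambda>(a,ts). Node a ts) ` ({1..m} \<times> FS V n) \<longleftrightarrow> n = edges u"
proof
  assume "u \<in> (\<lambda>(a,ts). Node a ts) ` ({1..m} \<times> FS V n)"
  then show "n = edges u" by (auto simp: FS_def)
next
  assume n: "n = edges u"
  obtain b us where u: "u = Node b us" by (cases u)
  have "\<not> contains_subtree s u" if "s \<in> set us" for s
  proof
    assume "contains_subtree s u"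
    then have "edges u \<le> edges s" by (auto simp: contains_subtree_def dest: subtrees_edges)
    moreover have "edges s < edges u" using edges_lt_fsz[OF that] u by simp
    ultimately show False by simp
  qed
  moreover have "\<forall>x\<in>set us. labeled m x" using lu u by simp
  ultimately have "set us \<subseteq> V" unfolding V_def by auto
  moreover have "b \<in> {1..m}" using lu u by auto
  ultimately have "(b, us) \<in> {1..m} \<times> FS V n" using n u by (simp add: FS_def)
  then show "u \<in> (\<lambda>(a,ts). Node a ts) ` ({1..m} \<times> FS V n)"
    using u by force
qed

lemma V_finite: "finite {t \<in> V. edges t = k}"
  by (rule finite_subset[OF _ TS_finite[of m k]]) (auto simp: V_def)

lemma AS_card: "card {t. labeled m t \<and> edges t = n \<and> \<not> contains_subtree t u} = m * card (FS V n) - (if n = edges u then 1 else 0)"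
proof -
  have "finite (FS V n)" by (rule FS_finite[OF V_finite])
  then show ?thesis unfolding AS_eq card_Diff_singleton_if u_in_iff
    by (simp add: card_image[OF inj_Node] card_cartesian_product)
qed

lemma V_set: "{t \<in> V. edges t = k} = {t. labeled m t \<and> edges t = k \<and> \<not> contains_subtree t u}"
  by (auto simp: V_def)

lemma a_rec: "real (card {t. labeled m t \<and> edges t = n \<and> \<not> contains_subtree t u}) =
   (if n = 0 then real m else 0) - (if n = edges u then 1 else 0) +
   (if n \<ge> 1 then (\<Sum>k\<le>n-1. real (card {t. labeled m t \<and> edges t = k \<and> \<not> contains_subtree t u}) * real (card {t. labeled m t \<and> edges t = n-1-k \<and> \<not> contains_subtree t u})) else 0)
   + (if n \<ge> edges u + 1 then real (card {t. labeled m t \<and> edges t = n - edges u - 1 \<and> \<not> contains_subtree t u}) else 0)"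
proof -
  define a where "a j = real (card {t. labeled m t \<and> edges t = j \<and> \<not> contains_subtree t u})" for j
  define f where "f j = real (card (FS V j))" for j
  have mf: "real m * f j = a j + (if j = edges u then 1 else 0)" for j
  proof -
    have fin: "finite ((\<lambda>(a,ts). Node a ts) ` ({1..m} \<times> FS V j))"
      using FS_finite[OF V_finite] by auto
    have "card ((\<lambda>(a,ts). Node a ts) ` ({1..m} \<times> FS V j)) \<ge> (if j = edges u then 1 else 0)"
      using u_in_iff[of j] card_gt_0_iff[of "(\<lambda>(a,ts). Node a ts) ` ({1..m} \<times> FS V j)"] fin
      by (auto simp del: edges_fsz)
    then have "m * card (FS V j) \<ge> (if j = edges u then 1 else 0)"
      by (simp add: card_image[OF inj_Node] card_cartesian_product del: edges_fsz)
    then show ?thesis unfolding a_def f_def AS_card by (simp add: of_nat_diff)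
  qed
  have "a n = (if n = 0 then real m else 0) - (if n = edges u then 1 else 0) +
   (if n \<ge> 1 then (\<Sum>k\<le>n-1. a k * a (n-1-k)) else 0)
   + (if n \<ge> edges u + 1 then a (n - edges u - 1) else 0)"
  proof (cases n)
    case 0
    have "a 0 = real m * f 0 - (if 0 = edges u then 1 else 0)" using mf[of 0] by simp
    then show ?thesis using 0 by (simp add: f_def FS_0)
  next
    case (Suc n')
    have fs: "f (Suc n') = (\<Sum>k\<le>n'. a k * f (n'-k))"
      unfolding f_def a_def FS_card_Suc[OF V_finite] V_set by simp
    have "a (Suc n') = real m * f (Suc n') - (if Suc n' = edges u then 1 else 0)" using mf[of "Suc n'"] by simp
    also have "real m * f (Suc n') = (\<Sum>k\<le>n'. a k * (real m * f (n'-k)))"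
      by (simp add: fs sum_distrib_left algebra_simps)
    also have "\<dots> = (\<Sum>k\<le>n'. a k * a (n'-k)) + (\<Sum>k\<le>n'. if k = n' - edges u \<and> edges u \<le> n' then a k else 0)"
      unfolding mf by (auto simp: algebra_simps sum.distrib intro!: sum.cong)
    also have "(\<Sum>k\<le>n'. if k = n' - edges u \<and> edges u \<le> n' then a k else 0) = (if edges u \<le> n' then a (n' - edges u) else 0)"
      by (cases "edges u \<le> n'") (simp_all add: sum.delta)
    finally show ?thesis using Suc by simp
  qed
  then show ?thesis unfolding a_def .
qed

end



lemma series_eq:
  fixes a :: "nat \<Rightarrow> real" and \<alpha> \<beta> \<gamma> z :: real
  assumes rec: "\<And>n. a n = (if n=0 then \<alpha> else 0) + (if n = p then \<beta> else 0) + (if n \<ge> 1 then (\<Sum>k\<le>n-1. a k * a (n-1-k)) else 0) + (if n \<ge> p+1 then \<gamma> * a (n-p-1) else 0)"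
  and sm: "summable (\<lambda>n. norm (a n * z^n))"
  shows "(\<Sum>n. a n * z^n) = \<alpha> + \<beta> * z^p + z * (\<Sum>n. a n * z^n)^2 + \<gamma> * z^(p+1) * (\<Sum>n. a n * z^n)"
proof -
  define S where "S = (\<Sum>n. a n * z^n)"
  have bS: "(\<lambda>n. a n * z^n) sums S" unfolding S_def using summable_norm_cancel[OF sm] by (simp add: summable_sums)
  have C: "(\<lambda>n. \<Sum>i\<le>n. (a i * z^i) * (a (n-i) * z^(n-i))) sums (S * S)"
    using Cauchy_product_sums[OF sm sm] unfolding S_def .
  have C': "(\<lambda>n. (\<Sum>i\<le>n. a i * a (n-i)) * z^n) sums (S * S)"
  proof -
    have "(\<Sum>i\<le>n. (a i * z^i) * (a (n-i) * z^(n-i))) = (\<Sum>i\<le>n. a i * a (n-i)) * z^n" for n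
      unfolding sum_distrib_right
      by (rule sum.cong) (auto simp: power_add[symmetric] algebra_simps)
    then show ?thesis using C by simp
  qed
  have s1: "(\<lambda>n. (if n=0 then \<alpha> else 0) * z^n) sums \<alpha>"
  proof -
    have "(\<lambda>n. (if n=0 then \<alpha> else 0) * z^n) = (\<lambda>r. if r = 0 then \<alpha>*z^r else 0)" by auto
    then show ?thesis using sums_single[of 0 "\<lambda>n. \<alpha> * z^n"] by simp
  qed
  have s2: "(\<lambda>n. (if n=p then \<beta> else 0) * z^n) sums (\<beta> * z^p)"
  proof -
    have "(\<lambda>n. (if n=p then \<beta> else 0) * z^n) = (\<lambda>r. if r = p then \<beta>*z^r else 0)" by auto
    then show ?thesis using sums_single[of p "\<lambda>n. \<beta> * z^n"] by simp
  qed
  have s3: "(\<lambda>n. (if n \<ge> 1 then (\<Sum>k\<le>n-1. a k * a (n-1-k)) else 0) * z^n) sums (z * S^2)"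
  proof -
    have "(\<lambda>n. z * ((\<Sum>i\<le>n. a i * a (n-i)) * z^n)) sums (z * (S*S))"
      by (rule sums_mult[OF C'])
    then have "(\<lambda>n. (\<lambda>n. (if n \<ge> 1 then (\<Sum>k\<le>n-1. a k * a (n-1-k)) else 0) * z^n) (Suc n)) sums (z * S^2)"
      by (simp add: power2_eq_square algebra_simps)
    then show ?thesis by (subst (asm) sums_Suc_iff) simp
  qed
  have s4: "(\<lambda>n. (if n \<ge> p+1 then \<gamma> * a (n-p-1) else 0) * z^n) sums (\<gamma> * z^(p+1) * S)"
  proof -
    have "(\<lambda>n. (\<gamma> * z^(p+1)) * (a n * z^n)) sums (\<gamma> * z^(p+1) * S)"
      by (rule sums_mult[OF bS])
    then have "(\<lambda>n. (\<lambda>n. (if n \<ge> p+1 then \<gamma> * a (n-p-1) else 0) * z^n) (n + (p+1))) sums (\<gamma> * z^(p+1) * S)"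
      by (simp add: power_add algebra_simps)
    then show ?thesis by (subst (asm) sums_iff_shift) simp
  qed
  have "(\<lambda>n. a n * z^n) sums (\<alpha> + \<beta> * z^p + z * S^2 + \<gamma> * z^(p+1) * S)"
  proof -
    have "(\<lambda>n. (if n=0 then \<alpha> else 0) * z^n + (if n=p then \<beta> else 0) * z^n + (if n \<ge> 1 then (\<Sum>k\<le>n-1. a k * a (n-1-k)) else 0) * z^n + (if n \<ge> p+1 then \<gamma> * a (n-p-1) else 0) * z^n)
      sums (\<alpha> + \<beta> * z^p + z * S^2 + \<gamma> * z^(p+1) * S)"
      by (intro sums_add s1 s2 s3 s4)
    moreover have "(\<lambda>n. (if n=0 then \<alpha> else 0) * z^n + (if n=p then \<beta> else 0) * z^n + (if n \<ge> 1 then (\<Sum>k\<le>n-1. a k * a (n-1-k)) else 0) * z^n + (if n \<ge> p+1 then \<gamma> * a (n-p-1) else 0) * z^n) = (\<lambda>n. a n * z^n)"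
      by (rule ext, subst (2) rec) (simp only: distrib_right)
    ultimately show ?thesis by simp
  qed
  then show ?thesis using bS sums_unique2 unfolding S_def[symmetric] by blast
qed

lemma quad_root:
  fixes y b c :: real
  assumes "y^2 - b*y + c = 0" "\<bar>y\<bar> < 1/4" "b \<ge> 3/4"
  shows "y = (b - sqrt (b^2 - 4*c)) / 2"
proof -
  have "b^2 - 4*c = (2*y - b)^2" using assms(1) by (simp add: power2_eq_square algebra_simps)
  then have "sqrt (b^2 - 4*c) = b - 2*y" using assms(2,3) by simp
  then show ?thesis by simp
qed

lemma conv_sq_le:
  fixes f :: "nat \<Rightarrow> real"
  assumes "\<And>n. f n \<ge> 0"
  shows "(\<Sum>n\<le>N. \<Sum>k\<le>n. f k * f (n-k)) \<le> (\<Sum>n\<le>N. f n)^2"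
proof -
  have "(\<Sum>n\<le>N. \<Sum>k\<le>n. f k * f (n-k)) = (\<Sum>(i,j)\<in>{(i,j). i+j \<le> N}. f i * f j)"
    by (rule sum.triangle_reindex_eq[symmetric])
  also have "\<dots> \<le> (\<Sum>(i,j)\<in>{..N}\<times>{..N}. f i * f j)"
    by (rule sum_mono2) (auto intro: mult_nonneg_nonneg assms)
  also have "\<dots> = (\<Sum>n\<le>N. f n)^2"
    by (simp add: power2_eq_square sum_product sum.cartesian_product)
  finally show ?thesis .
qed



lemma t_bound:
  assumes m: "m \<ge> 1"
  shows "real (card {t. labeled m t \<and> edges t = n}) \<le> 2 * real m * (8 * real m)^n"
proof -
  define t where "t j = real (card {t. labeled m t \<and> edges t = j})" for j
  define x :: real where "x = 1 / (8 * real m)"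
  have x0: "x > 0" using m by (simp add: x_def)
  define f where "f j = t j * x^j" for j
  have f0: "f j \<ge> 0" for j using x0 by (simp add: f_def t_def)
  have tS: "t (Suc n) = (\<Sum>k\<le>n. t k * t (n-k))" for n
    using t_rec[of m "Suc n"] unfolding t_def by simp
  have t0: "t 0 = real m" using t_rec[of m 0] unfolding t_def by simp
  have P: "(\<Sum>n\<le>N. f n) \<le> 2 * real m" for N
  proof (induct N)
    case 0 then show ?case using t0 by (simp add: f_def)
  next
    case (Suc N)
    have "(\<Sum>n\<le>Suc N. f n) = f 0 + (\<Sum>n\<le>N. f (Suc n))" by (rule sum.atMost_Suc_shift)
    also have "(\<Sum>n\<le>N. f (Suc n)) = x * (\<Sum>n\<le>N. \<Sum>k\<le>n. f k * f (n-k))"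
    proof -
      have "f (Suc n) = x * (\<Sum>k\<le>n. f k * f (n-k))" for n
        unfolding f_def tS sum_distrib_left sum_distrib_right
        by (rule sum.cong) (auto simp: power_add[symmetric] algebra_simps)
      then show ?thesis by (simp add: sum_distrib_left)
    qed
    also have "\<dots> \<le> x * (\<Sum>n\<le>N. f n)^2"
      using conv_sq_le[of f N] f0 x0 by (simp add: mult_left_mono)
    also have "\<dots> \<le> x * (2 * real m)^2"
      using Suc x0 f0 by (intro mult_left_mono power_mono) (auto intro: sum_nonneg)
    finally have "(\<Sum>n\<le>Suc N. f n) \<le> real m + x * (2 * real m)^2" using t0 by (simp add: f_def)
    also have "x * (2 * real m)^2 = real m / 2" using m by (simp add: x_def power2_eq_square)
    finally show ?case by simp
  qed
  have "f n \<le> (\<Sum>k\<le>n. f k)" by (rule member_le_sum) (auto intro: f0)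
  with P[of n] have "t n * x^n \<le> 2 * real m" by (simp add: f_def)
  then have "t n \<le> 2 * real m / x^n" using x0 by (simp add: field_simps)
  also have "2 * real m / x^n = 2 * real m * (8 * real m)^n" using m
    by (simp add: x_def power_one_over)
  finally show ?thesis unfolding t_def .
qed



theorem lemma10:
  fixes m p :: nat and u :: utree
  assumes "m \<ge> 1" and "labeled m u" and "edges u = p"
  shows "\<exists>r>0. \<forall>z::real. 0 < \<bar>z\<bar> \<and> \<bar>z\<bar> < r \<longrightarrow>
           (\<lambda>n. real (count_containing m u n) * z ^ n) sums
             ((z ^ (p + 1) + sqrt (1 - 4 * real m * z + 2 * z ^ (p + 1) + z ^ (2 * p + 2))
               - sqrt (1 - 4 * real m * z)) / (2 * z))"
proof -
  note m = assms(1) and lu = assms(2) and pu = assms(3)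
  define t where "t j = real (card {t. labeled m t \<and> edges t = j})" for j
  define a where "a j = real (card {t. labeled m t \<and> edges t = j \<and> \<not> contains_subtree t u})" for j
  have tb: "t n \<le> 2 * real m * (8 * real m)^n" for n unfolding t_def by (rule t_bound[OF m])
  have at: "a n \<le> t n" for n
    unfolding a_def t_def by (simp, rule card_mono[OF TS_finite]) auto
  have a0: "a n \<ge> 0" for n by (simp add: a_def)
  have c: "real (count_containing m u n) = t n - a n" for n
  proof -
    have "{t. labeled m t \<and> edges t = n \<and> contains_subtree t u} = {t. labeled m t \<and> edges t = n} - {t. labeled m t \<and> edges t = n \<and> \<not> contains_subtree t u}"
      by auto
    moreover have sub: "{t. labeled m t \<and> edges t = n \<and> \<not> contains_subtree t u} \<subseteq> {t. labeled m t \<and> edges t = n}" by auto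
    moreover have "finite {t. labeled m t \<and> edges t = n \<and> \<not> contains_subtree t u}"
      by (rule finite_subset[OF sub TS_finite])
    ultimately show ?thesis unfolding count_containing_def t_def a_def
      by (simp add: card_Diff_subset card_mono[OF TS_finite sub] of_nat_diff)
  qed
  have trec: "t n = (if n=0 then real m else 0) + (if n = p then 0 else 0) + (if n \<ge> 1 then (\<Sum>k\<le>n-1. t k * t (n-1-k)) else 0) + (if n \<ge> p+1 then 0 * t (n-p-1) else 0)" for n
    using t_rec[of m n] unfolding t_def by simp
  have arec: "a n = (if n=0 then real m else 0) + (if n = p then -1 else 0) + (if n \<ge> 1 then (\<Sum>k\<le>n-1. a k * a (n-1-k)) else 0) + (if n \<ge> p+1 then 1 * a (n-p-1) else 0)" for n
    using a_rec[OF lu, of n] unfolding a_def pu by simp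
  define r :: real where "r = 1 / (16 * real m)"
  have r0: "r > 0" using m by (simp add: r_def)
  show ?thesis
  proof (intro exI[of _ r] conjI r0 allI impI)
    fix z :: real assume z: "0 < \<bar>z\<bar> \<and> \<bar>z\<bar> < r"
    define q where "q = 8 * real m * \<bar>z\<bar>"
    have r16: "16 * real m * \<bar>z\<bar> < 1"
    proof -
      have "\<bar>z\<bar> < 1 / (16 * real m)" using z by (simp add: r_def)
      then show ?thesis using m by (simp add: pos_less_divide_eq mult.commute)
    qed
    have q: "0 \<le> q" "q < 1/2" using r16 by (auto simp: q_def)
    have geo: "(\<lambda>n. 2 * real m * q^n) sums (2 * real m / (1 - q))"
      using sums_mult[OF geometric_sums[of q], of "2 * real m"] q by simp
    have tz: "norm (t n * z^n) \<le> 2 * real m * q^n" for n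
    proof -
      have "norm (t n * z^n) = t n * \<bar>z\<bar>^n" using at[of n] a0[of n] by (simp add: abs_mult power_abs)
      also have "\<dots> \<le> 2 * real m * (8 * real m)^n * \<bar>z\<bar>^n" by (rule mult_right_mono[OF tb]) simp
      finally show ?thesis by (simp add: q_def power_mult_distrib)
    qed
    have az: "norm (a n * z^n) \<le> 2 * real m * q^n" for n
    proof -
      have "norm (a n * z^n) \<le> norm (t n * z^n)" using at[of n] a0[of n]
        by (simp add: abs_mult mult_right_mono)
      then show ?thesis using tz[of n] by linarith
    qed
    have smt: "summable (\<lambda>n. norm (t n * z^n))"
      by (rule summable_comparison_test[OF _ sums_summable[OF geo]]) (use tz in auto)
    have sma: "summable (\<lambda>n. norm (a n * z^n))"
      by (rule summable_comparison_test[OF _ sums_summable[OF geo]]) (use az in auto)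
    define St where "St = (\<Sum>n. t n * z^n)"
    define Sa where "Sa = (\<Sum>n. a n * z^n)"
    have bnd: "\<bar>S\<bar> \<le> 4 * real m" if "summable (\<lambda>n. norm (b n * z^n))" "\<And>n. norm (b n * z^n) \<le> 2 * real m * q^n"
       and "S = (\<Sum>n. b n * z^n)" for S and b :: "nat \<Rightarrow> real"
    proof -
      have "\<bar>S\<bar> \<le> (\<Sum>n. norm (b n * z^n))" unfolding that(3) using summable_norm[OF that(1)] by simp
      also have "\<dots> \<le> (\<Sum>n. 2 * real m * q^n)"
        by (rule suminf_le[OF that(2) that(1) sums_summable[OF geo]])
      also have "\<dots> = 2 * real m / (1 - q)" using geo by (simp add: sums_iff)
      also have "\<dots> \<le> 4 * real m" using q m by (simp add: field_simps)
      finally show ?thesis .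
    qed
    have zm: "4 * real m * \<bar>z\<bar> < 1/4" using r16 by simp
    have "real m * \<bar>z\<bar> \<ge> \<bar>z\<bar>" using m by (simp add: mult_le_cancel_right1)
    then have zs: "\<bar>z\<bar> < 1/16" using r16 by simp
    have Et: "St = real m + 0 * z^p + z * St^2 + 0 * z^(p+1) * St"
      unfolding St_def by (rule series_eq[OF trec smt])
    have Ea: "Sa = real m + (-1) * z^p + z * Sa^2 + 1 * z^(p+1) * Sa"
      unfolding Sa_def by (rule series_eq[OF arec sma])
    have yt: "\<bar>z * St\<bar> < 1/4"
    proof -
      have "\<bar>z * St\<bar> = \<bar>z\<bar> * \<bar>St\<bar>" by (simp add: abs_mult)
      also have "\<dots> \<le> \<bar>z\<bar> * (4 * real m)" by (rule mult_left_mono[OF bnd[OF smt tz St_def]]) simp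
      finally show ?thesis using zm by (simp add: mult.commute mult.left_commute)
    qed
    have ya: "\<bar>z * Sa\<bar> < 1/4"
    proof -
      have "\<bar>z * Sa\<bar> = \<bar>z\<bar> * \<bar>Sa\<bar>" by (simp add: abs_mult)
      also have "\<dots> \<le> \<bar>z\<bar> * (4 * real m)" by (rule mult_left_mono[OF bnd[OF sma az Sa_def]]) simp
      finally show ?thesis using zm by (simp add: mult.commute mult.left_commute)
    qed
    define w where "w = z^(p+1)"
    have wz: "\<bar>w\<bar> \<le> \<bar>z\<bar>" unfolding w_def power_abs
      using zs by (simp add: power_le_one power_Suc mult_left_le)
    have qt: "(z*St)^2 - 1 * (z*St) + real m * z = 0"
    proof -
      have "(z*St)^2 - 1 * (z*St) + real m * z = z * (real m + 0 * z^p + z * St^2 + 0 * z^(p+1) * St - St)"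
        by (simp add: power2_eq_square algebra_simps)
      also have "real m + 0 * z^p + z * St^2 + 0 * z^(p+1) * St - St = 0" using Et by linarith
      finally show ?thesis by simp
    qed
    have qa: "(z*Sa)^2 - (1 - w) * (z*Sa) + (real m * z - w) = 0"
    proof -
      have "(z*Sa)^2 - (1 - w) * (z*Sa) + (real m * z - w) = z * (real m + (-1) * z^p + z * Sa^2 + 1 * z^(p+1) * Sa - Sa)"
        by (simp add: w_def power2_eq_square algebra_simps)
      also have "real m + (-1) * z^p + z * Sa^2 + 1 * z^(p+1) * Sa - Sa = 0" using Ea by linarith
      finally show ?thesis by simp
    qed
    have rt: "z * St = (1 - sqrt (1^2 - 4 * (real m * z))) / 2"
      by (rule quad_root[OF qt yt]) simp
    have ra: "z * Sa = ((1 - w) - sqrt ((1 - w)^2 - 4 * (real m * z - w))) / 2"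
      by (rule quad_root[OF qa ya]) (use wz zs in auto)
    have w2: "z ^ (2 * p + 2) = w^2" unfolding w_def power_mult[symmetric]
      by (simp add: mult.commute)
    have D: "(1 - w)^2 - 4 * (real m * z - w) = 1 - 4 * real m * z + 2 * z ^ (p + 1) + z ^ (2 * p + 2)"
      unfolding w2 w_def[symmetric] by (simp add: power2_eq_square algebra_simps)
    have zne: "z \<noteq> 0" using z by auto
    have "St - Sa = (z^(p+1) + sqrt (1 - 4 * real m * z + 2 * z ^ (p + 1) + z ^ (2 * p + 2))
               - sqrt (1 - 4 * real m * z)) / (2 * z)"
    proof -
      have "z * (St - Sa) = z * St - z * Sa" by (simp add: right_diff_distrib)
      also have "\<dots> = (1 - sqrt (1 - 4 * real m * z)) / 2 - ((1 - w) - sqrt (1 - 4 * real m * z + 2 * z ^ (p + 1) + z ^ (2 * p + 2))) / 2"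
        unfolding rt ra D by (simp add: mult.assoc)
      also have "\<dots> = (z^(p+1) + sqrt (1 - 4 * real m * z + 2 * z ^ (p + 1) + z ^ (2 * p + 2))
               - sqrt (1 - 4 * real m * z)) / 2"
        unfolding w_def by (simp add: field_simps)
      finally have "z * (St - Sa) = (z^(p+1) + sqrt (1 - 4 * real m * z + 2 * z ^ (p + 1) + z ^ (2 * p + 2))
               - sqrt (1 - 4 * real m * z)) / 2" .
      then show ?thesis using zne by (simp add: field_simps)
    qed
    moreover have "(\<lambda>n. real (count_containing m u n) * z ^ n) sums (St - Sa)"
      unfolding c St_def Sa_def left_diff_distrib
      by (intro sums_diff summable_sums summable_norm_cancel[OF smt] summable_norm_cancel[OF sma])
    ultimately show "(\<lambda>n. real (count_containing m u n) * z ^ n) sums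
             ((z ^ (p + 1) + sqrt (1 - 4 * real m * z + 2 * z ^ (p + 1) + z ^ (2 * p + 2))
               - sqrt (1 - 4 * real m * z)) / (2 * z))" by simp
  qed
qed


end
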